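(* For all $n,k\ge0$, $$[x^ny^k]\,\frac{1}{x}\,\mathrm{Rev}\left(\frac{x(1-yx)}{1+rx+sx^2}\right)=\sum_{j=k}^n\binom{j}{k}\binom{n+k}{2j}s^{\,j-k}r^{\,n+k-2j}C_j,$$ where $C_j=\frac{1}{j+1}\binom{2j}{j}$ (only terms with $2j\le n+k$ contribute).
   Context: $\mathrm{Rev}$ denotes compositional inverse with respect to $x$. *)

theory Defs
  imports "HOL-Computational_Algebra.Formal_Power_Series"
begin

definition Rev :: "'a::comm_ring_1 fps \<Rightarrow> 'a fps" where
  "Rev f = (THE g. fps_nth g 0 = 0 \<and> f oo g = fps_X)"

definition catalan :: "nat \<Rightarrow> 'a::field_char_0" where
  "catalan j = of_nat ((2*j) choose j) / of_nat (j + 1)"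

end

theory Submission
  imports Defs
begin
unbundle fps_syntax
declare binomial_Suc_Suc [simp del]

lemma nat_aux: fixes n X Y Z :: nat
  assumes "Suc n * X = 2 * Suc n * Y" "Suc n * Y' = Suc (2*n) * Z" "Y = Y'"
  shows "X * Suc n = 2*(2*n+1)*Z"
proof -
  have "Suc n * X = Suc n * (2*Y)" using assms(1) by simp
  then have "X = 2 * Y" by (simp only: mult_left_cancel nat.simps simp_thms)
  then have "Suc n * X = 2 * (Suc n * Y')" using assms(3) by simp
  then have "Suc n * X = 2 * (Suc (2*n) * Z)" using assms(2) by simp
  then show ?thesis by (simp add: mult.commute)
qed

lemma central_rec: "(2*Suc n choose Suc n) * Suc n = 2*(2*n+1)*(2*n choose n)"
proof (rule nat_aux)
  have h1: "Suc n * (Suc (2*n+1) choose Suc n) = Suc (2*n+1) * (2*n+1 choose n)"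
    by (rule Suc_times_binomial)
  moreover have e: "Suc (2*n+1) = 2 * Suc n" "2 * Suc n = Suc (2*n+1)" by simp_all
  ultimately show "Suc n * (2*Suc n choose Suc n) = 2 * Suc n * (2*n+1 choose n)"
    by metis
  show "Suc n * (Suc (2*n) choose Suc n) = Suc (2*n) * (2*n choose n)"
    by (rule Suc_times_binomial)
  have h3: "Suc n * (Suc (n+n) choose Suc n) = Suc n * (Suc (n+n) choose n)"
    by (rule Suc_times_binomial_add)
  then have "(Suc (n+n) choose Suc n) = (Suc (n+n) choose n)"
    by (simp only: mult_left_cancel nat.simps simp_thms)
  then show "(2*n+1 choose n) = (Suc (2*n) choose Suc n)" by (simp add: mult_2)
qed

lemma catalan_gb:
  "(catalan n :: 'a::field_char_0) = - (1/2) * (-4)^(Suc n) * ((1/2::'a) gchoose (Suc n))"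
proof (induction n)
  case 0
  then show ?case by (simp add: catalan_def)
next
  case (Suc n)
  have g: "of_nat (Suc (Suc n)) * ((1/2::'a) gchoose Suc (Suc n)) = (1/2 - of_nat (Suc n)) * ((1/2::'a) gchoose Suc n)"
  proof -
    have "(1/2::'a) * ((1/2) gchoose Suc n) = of_nat (Suc n) * ((1/2) gchoose Suc n) + of_nat (Suc (Suc n)) * ((1/2::'a) gchoose Suc (Suc n))"
      by (rule gbinomial_mult_1)
    then have "of_nat (Suc (Suc n)) * ((1/2::'a) gchoose Suc (Suc n)) = (1/2::'a) * ((1/2) gchoose Suc n) - of_nat (Suc n) * ((1/2) gchoose Suc n)"
      by (simp add: eq_diff_eq add.commute)
    then show ?thesis by (simp add: algebra_simps)
  qed
  have nz1: "(of_nat (Suc n) :: 'a) \<noteq> 0" "(of_nat (Suc (Suc n)) :: 'a) \<noteq> 0" by (simp_all only: of_nat_eq_0_iff)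
  have nz2: "(of_nat n + 2::'a) \<noteq> 0" "(2 + of_nat n::'a) \<noteq> 0" "(of_nat n + 1::'a) \<noteq> 0" "(1 + of_nat n::'a) \<noteq> 0"
    using nz1 by (simp_all add: add.commute)
  have cr: "(of_nat (2*Suc n choose Suc n) :: 'a) * of_nat (Suc n) = 2*(2*of_nat n+1)*of_nat (2*n choose n)"
    using arg_cong[OF central_rec[of n], of "of_nat :: nat \<Rightarrow> 'a"] by (simp add: algebra_simps)
  have c: "(catalan (Suc n) :: 'a) = catalan n * (2 * (2 * of_nat n + 1)) / of_nat (Suc (Suc n))"
  proof -
    have "(catalan (Suc n) :: 'a) = of_nat (2*Suc n choose Suc n) / of_nat (Suc (Suc n))"
      unfolding catalan_def by simp
    also have "of_nat (2*Suc n choose Suc n) = (2*(2*of_nat n+1)*of_nat (2*n choose n)) / (of_nat (Suc n) :: 'a)"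
      using cr nz1 by (simp add: eq_divide_eq)
    also have "\<dots> = catalan n * (2 * (2 * of_nat n + 1))"
      unfolding catalan_def using nz1 by (simp add: field_simps)
    finally show ?thesis .
  qed
  have k: "(1/2 - of_nat (Suc n)) * (-4::'a) = 2*(2*of_nat n+1)" by (simp add: algebra_simps)
  have gS: "((1/2::'a) gchoose Suc (Suc n)) = (1/2 - of_nat (Suc n)) * ((1/2::'a) gchoose Suc n) / of_nat (Suc (Suc n))"
    using g nz1 by (simp add: eq_divide_eq mult.commute)
  have "(catalan (Suc n) :: 'a) = - (1/2) * (-4)^(Suc n) * ((1/2::'a) gchoose Suc n) * (2 * (2 * of_nat n + 1)) / of_nat (Suc (Suc n))"
    unfolding c Suc.IH by simp
  also have "\<dots> = - (1/2) * (-4)^(Suc n) * ((1/2::'a) gchoose Suc n) * ((1/2 - of_nat (Suc n)) * (-4::'a)) / of_nat (Suc (Suc n))"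
    unfolding k ..
  also have "\<dots> = - (1/2) * ((-4)^(Suc n) * (-4)) * ((1/2 - of_nat (Suc n)) * ((1/2::'a) gchoose Suc n) / of_nat (Suc (Suc n)))"
    by (simp only: times_divide_eq_right mult_ac)
  also have "\<dots> = - (1/2) * (-4)^(Suc (Suc n)) * ((1/2::'a) gchoose (Suc (Suc n)))"
    unfolding gS[symmetric] by (simp only: power_Suc2)
  finally show ?case .
qed

lemma cat_fps_eq:
  "Abs_fps (catalan :: nat \<Rightarrow> 'a::field_char_0) = 1 + fps_X * (Abs_fps catalan)^2"
proof -
  define C where "C = Abs_fps (catalan :: nat \<Rightarrow> 'a)"
  define B where "B = fps_binomial (1/2::'a)"
  define D where "D = B oo (fps_const (-4) * fps_X)"
  have BB: "B * B = 1 + fps_X"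
    unfolding B_def fps_binomial_add_mult[symmetric] by (simp add: fps_binomial_1)
  have "D * D = (B * B) oo (fps_const (-4) * fps_X)"
    unfolding D_def by (rule fps_compose_mult_distrib[symmetric]) simp
  also have "\<dots> = 1 + fps_const (-4) * fps_X"
    unfolding BB by (simp add: fps_compose_add_distrib)
  finally have DD: "D * D = 1 + fps_const (-4) * fps_X" .
  have Dc: "D = 1 - fps_const 2 * fps_X * C"
  proof (rule fps_ext)
    fix n show "D $ n = (1 - fps_const 2 * fps_X * C) $ n"
    proof (cases n)
      case 0 then show ?thesis by (simp add: D_def B_def fps_compose_linear)
    next
      case (Suc m)
      then show ?thesis unfolding D_def B_def C_def fps_compose_linear
        by (simp add: catalan_gb[of m] mult.assoc)
    qed
  qed
  have n2: "fps_const (2::'a) = 2" and n4: "fps_const (-4::'a) = -4"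
    by (simp_all add: numeral_fps_const neg_numeral_fps_const)
  have "4 * fps_X * (1 + fps_X * C^2 - C) = (D * D) - (1 + fps_const (-4) * fps_X)"
    unfolding Dc n2 n4 by (simp add: algebra_simps power2_eq_square)
  also have "\<dots> = 0" using DD by simp
  finally have "4 * fps_X * (1 + fps_X * C^2 - C) = 0" .
  then have "1 + fps_X * C^2 - C = 0" by simp
  then show ?thesis unfolding C_def[symmetric] by simp
qed

lemma catalan_conv:
  "(catalan (Suc n) :: 'a::field_char_0) = (\<Sum>i=0..n. catalan i * catalan (n-i))"
proof -
  have "(catalan (Suc n) :: 'a) = Abs_fps catalan $ Suc n" by simp
  also have "\<dots> = (1 + fps_X * (Abs_fps catalan)^2) $ Suc n" by (subst cat_fps_eq) simp
  also have "\<dots> = (Abs_fps catalan * Abs_fps catalan) $ n"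
    by (simp only: fps_add_nth fps_X_mult_nth power2_eq_square nat.simps if_False fps_one_nth diff_Suc_1) simp
  also have "\<dots> = (\<Sum>i=0..n. catalan i * catalan (n-i))"
    by (simp only: fps_mult_nth fps_nth_Abs_fps)
  finally show ?thesis .
qed



definition cc :: "'a::comm_ring_1 \<Rightarrow> 'a fps fps" where
  "cc c = fps_const (fps_const c)"

lemma cc_simps [simp]:
  "cc (a * b) = cc a * cc b" "cc (a + b) = cc a + cc b" "cc (a ^ n) = cc a ^ n"
  "cc 1 = 1" "cc 0 = 0" "cc (of_nat m) = of_nat m" "cc (- a) = - cc a"
  by (simp_all add: cc_def fps_of_nat)

lemma cc_sum: "cc (sum f A) = (\<Sum>x\<in>A. cc (f x))"
  by (induction A rule: infinite_finite_induct) simp_all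

lemma cc_nth [simp]: "cc c $ n = (if n = 0 then fps_const c else 0)"
  by (simp add: cc_def)

lemma cc_mult_nth [simp]: "(cc c * f) $ n = fps_const c * f $ n"
  by (simp add: cc_def)

lemma fps_const_sum: "fps_const (sum f A) = (\<Sum>x\<in>A. fps_const (f x))"
  by (induction A rule: infinite_finite_induct) (simp_all flip: fps_const_add)

definition Cat2 :: "'a::field_char_0 fps fps" where
  "Cat2 = Abs_fps (\<lambda>j. fps_const (catalan j))"

lemma Cat2_eq: "(Cat2 :: 'a::field_char_0 fps fps) = 1 + fps_X * Cat2^2"
proof (rule fps_ext)
  fix n show "(Cat2 :: 'a fps fps) $ n = (1 + fps_X * Cat2^2) $ n"
  proof (cases n)
    case 0 then show ?thesis by (simp add: Cat2_def catalan_def cc_def)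
  next
    case (Suc m)
    have "(Cat2 :: 'a fps fps) $ n = fps_const (catalan (Suc m))"
      by (simp add: Suc Cat2_def)
    also have "\<dots> = fps_const (\<Sum>i=0..m. catalan i * catalan (m-i))"
      by (simp only: catalan_conv)
    also have "\<dots> = (Cat2 * Cat2) $ m"
      by (simp add: fps_const_sum fps_mult_nth Cat2_def)
    also have "\<dots> = (1 + fps_X * Cat2^2) $ n"
      unfolding Suc by (simp add: power2_eq_square)
    finally show ?thesis .
  qed
qed

definition Eg :: "'a::comm_ring_1 \<Rightarrow> 'a fps fps" where
  "Eg r = Abs_fps (\<lambda>m. fps_const (r ^ m))"

lemma Eg_inv: "Eg r * (1 - cc r * fps_X) = 1"
proof (rule fps_ext)
  fix n
  have e: "Eg r * (1 - cc r * fps_X) = Eg r - cc r * (fps_X * Eg r)" by (simp add: algebra_simps)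
  show "(Eg r * (1 - cc r * fps_X)) $ n = 1 $ n"
    unfolding e by (cases n) (simp_all add: Eg_def)
qed

lemma Eg_pow_nth: "(Eg r ^ Suc a) $ m = fps_const (of_nat ((m + a) choose a) * r ^ m)"
proof (induction a arbitrary: m)
  case 0
  then show ?case by (simp add: Eg_def)
next
  case (Suc a)
  define P where "P = Eg r ^ Suc (Suc a)"
  define Q where "Q = Eg r ^ Suc a"
  have PQ: "Q = P - cc r * (fps_X * P)"
  proof -
    have "Q = Q * (Eg r * (1 - cc r * fps_X))" by (simp add: Eg_inv)
    also have "\<dots> = P - cc r * (fps_X * P)"
      unfolding P_def Q_def by (simp add: power_Suc2 right_diff_distrib mult_ac)
    finally show ?thesis .
  qed
  have rec: "P $ k = Q $ k + (if k = 0 then 0 else fps_const r * P $ (k-1))" for k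
    unfolding PQ by simp
  note outer = Suc.IH
  show ?case unfolding P_def[symmetric]
  proof (induction m)
    case 0
    show ?case unfolding rec[of 0] by (simp add: Q_def outer fps_nth_power_0 Eg_def)
  next
    case (Suc m)
    have "P $ Suc m = fps_const (of_nat ((Suc m + a) choose a) * r ^ Suc m)
        + fps_const r * fps_const (of_nat ((m + Suc a) choose Suc a) * r ^ m)"
      unfolding rec[of "Suc m"] Q_def outer by (simp add: Suc.IH)
    also have "\<dots> = fps_const (of_nat ((Suc m + Suc a) choose Suc a) * r ^ Suc m)"
    proof -
      have "Suc (m + Suc a) choose Suc a = ((m + Suc a) choose a) + ((m + Suc a) choose Suc a)"
        by (rule binomial_Suc_Suc)
      moreover have "Suc m + Suc a = Suc (m + Suc a)" "Suc m + a = m + Suc a" by simp_all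
      ultimately have "of_nat ((Suc m + Suc a) choose Suc a) * r ^ Suc m = of_nat ((Suc m + a) choose a) * r ^ Suc m + r * (of_nat ((m + Suc a) choose Suc a) * r ^ m)"
        by (simp only: of_nat_add distrib_right mult.assoc mult.left_commute[of r] power_Suc)
      then show ?thesis by (simp only: fps_const_add fps_const_mult)
    qed
    finally show ?case .
  qed
qed



definition WW :: "'a::field_char_0 \<Rightarrow> 'a \<Rightarrow> 'a fps fps" where
  "WW r s = fps_X * (fps_const fps_X + cc s * fps_X) * Eg r ^ 2"

definition AA :: "'a::field_char_0 \<Rightarrow> 'a \<Rightarrow> 'a fps fps" where
  "AA r s = Eg r * (Cat2 oo WW r s)"

lemma WW0: "WW r s $ 0 = 0" by (simp add: WW_def mult.assoc)

lemma AA_func: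
  "AA r s - fps_const fps_X * fps_X * AA r s ^ 2 = 1 + cc r * fps_X * AA r s + cc s * fps_X^2 * AA r s ^ 2"
proof -
  define W where "W = WW r s"
  define N where "N = Cat2 oo W"
  have W0: "W $ 0 = 0" unfolding W_def by (rule WW0)
  have NN: "N = 1 + W * N^2"
  proof -
    have "N = (1 + fps_X * Cat2^2) oo W" unfolding N_def by (subst Cat2_eq) (rule refl)
    also have "\<dots> = 1 + W * N^2"
      unfolding N_def by (simp add: fps_compose_add_distrib fps_compose_mult_distrib[OF W0] fps_compose_power[OF W0] W0)
    finally show ?thesis .
  qed
  have QA: "(1 - cc r * fps_X) * AA r s = N"
    unfolding AA_def N_def W_def using Eg_inv[of r] by (simp add: mult.assoc[symmetric] mult.commute[of "1 - cc r * fps_X"])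
  have QA2: "(1 - cc r * fps_X) * AA r s = 1 + fps_X * (fps_const fps_X + cc s * fps_X) * AA r s ^ 2"
  proof -
    have AAN: "AA r s = Eg r * N" unfolding AA_def N_def W_def ..
    show ?thesis unfolding QA
      apply (subst NN)
      unfolding AAN W_def WW_def by (simp add: power_mult_distrib mult_ac)
  qed
  have "(AA r s - fps_const fps_X * fps_X * AA r s ^ 2) - (1 + cc r * fps_X * AA r s + cc s * fps_X^2 * AA r s ^ 2)
      = (1 - cc r * fps_X) * AA r s - (1 + fps_X * (fps_const fps_X + cc s * fps_X) * AA r s ^ 2)"
    by (simp add: algebra_simps power2_eq_square)
  also have "\<dots> = 0" using QA2 by simp
  finally show ?thesis by simp
qed

lemma cc_compose [simp]: "cc c oo g = cc c" by (simp add: cc_def)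

lemma AA0: "AA r s $ 0 = 1"
  by (simp add: AA_def Eg_def Cat2_def catalan_def)

lemma Rev_eq:
  fixes r s :: "'a::field_char_0"
  defines "P \<equiv> 1 + cc r * fps_X + cc s * fps_X^2"
  shows "Rev (fps_X * (1 - fps_const fps_X * fps_X) * inverse P) = fps_X * AA r s"
proof -
  define F where "F = fps_X * (1 - fps_const fps_X * fps_X) * inverse P"
  define g where "g = fps_X * AA r s"
  have g0: "g $ 0 = 0" unfolding g_def by simp
  have g1: "g $ 1 \<noteq> 0" unfolding g_def by (simp add: AA0)
  have F0: "F $ 0 = 0" unfolding F_def by (simp add: mult.assoc)
  have P0: "P $ 0 = 1" unfolding P_def by simp
  have PinvP: "P * inverse P = 1"
  proof -
    have "P $ 0 * inverse (P $ 0) = 1" unfolding P0 by (rule inverse_mult_eq_1') simp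
    then show ?thesis unfolding fps_inverse_def by (rule fps_right_inverse)
  qed
  have Pg: "P oo g = 1 + cc r * g + cc s * g^2"
    unfolding P_def by (simp add: fps_compose_add_distrib fps_compose_mult_distrib[OF g0] fps_compose_power[OF g0, symmetric] g0)
  have Pg1: "(P oo g) * (inverse P oo g) = 1"
    by (simp add: fps_compose_mult_distrib[OF g0, symmetric] PinvP)
  have num: "(fps_X * (1 - fps_const fps_X * fps_X)) oo g = g * (1 - fps_const fps_X * g)"
    by (simp add: fps_compose_mult_distrib[OF g0] fps_compose_sub_distrib g0)
  have key: "g * (1 - fps_const fps_X * g) = fps_X * (P oo g)"
  proof -
    have "g * (1 - fps_const fps_X * g) = fps_X * (AA r s - fps_const fps_X * fps_X * AA r s ^ 2)"
      unfolding g_def by (simp add: algebra_simps power2_eq_square)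
    also have "\<dots> = fps_X * (1 + cc r * fps_X * AA r s + cc s * fps_X^2 * AA r s ^ 2)"
      by (simp only: AA_func)
    also have "\<dots> = fps_X * (P oo g)"
      unfolding Pg unfolding g_def by (simp add: algebra_simps power2_eq_square)
    finally show ?thesis .
  qed
  have Fg: "F oo g = fps_X"
  proof -
    have "F oo g = ((fps_X * (1 - fps_const fps_X * fps_X)) oo g) * (inverse P oo g)"
      unfolding F_def by (simp add: fps_compose_mult_distrib[OF g0])
    also have "\<dots> = fps_X * ((P oo g) * (inverse P oo g))"
      unfolding num key by (simp add: mult.assoc)
    finally show ?thesis unfolding Pg1 by simp
  qed
  have gF: "g oo F = fps_X"
  proof -
    have "(g oo F) oo g = g oo (F oo g)" by (rule fps_compose_assoc[OF g0 F0, symmetric])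
    also have "\<dots> = fps_X oo g" unfolding Fg using g0 by simp
    finally show ?thesis using fps_compose_inj_right[OF g0 g1] by blast
  qed
  have "Rev F = g"
    unfolding Rev_def
  proof (rule the_equality)
    show "g $ 0 = 0 \<and> F oo g = fps_X" using g0 Fg by simp
    fix h assume h: "h $ 0 = 0 \<and> F oo h = fps_X"
    then have "h = fps_X oo h" by simp
    also have "\<dots> = (g oo F) oo h" unfolding gF ..
    also have "\<dots> = g oo (F oo h)" using fps_compose_assoc[of h F g] h F0 by simp
    also have "\<dots> = g" using h by simp
    finally show "h = g" .
  qed
  then show ?thesis unfolding F_def g_def .
qed



lemma term_nth:
  "((fps_X^p * (fps_const (fps_X^i) * cc c * Eg r ^ Suc q)) $ n) $ k =
    (if p \<le> n \<and> k = i then c * of_nat (((n-p)+q) choose q) * r^(n-p) else 0)"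
proof (cases "p \<le> n")
  case True
  have "(fps_X^p * (fps_const (fps_X^i) * cc c * Eg r ^ Suc q)) $ n
      = fps_X^i * fps_const (c * (of_nat (((n-p)+q) choose q) * r^(n-p)))"
    using True by (simp add: fps_X_power_mult_nth Eg_pow_nth mult.assoc cc_def del: power_Suc)
  then show ?thesis using True by (simp add: fps_X_power_mult_nth mult.assoc)
next
  case False
  then show ?thesis by (simp add: fps_X_power_mult_nth)
qed

lemma T_nth:
  "((fps_X^j * (fps_const fps_X + cc s * fps_X)^j * Eg r ^ Suc (2*j)) $ n) $ k =
    (if 2*j \<le> n + k then of_nat (j choose k) * s^(j-k) * of_nat ((n+k) choose (2*j)) * r^(n+k-2*j) else 0)"
proof -
  define E where "E = Eg r ^ Suc (2*j)"
  have expand: "fps_X^j * (fps_const fps_X + cc s * fps_X)^j * E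
      = (\<Sum>i\<le>j. fps_X^(2*j-i) * (fps_const (fps_X^i) * cc (of_nat (j choose i) * s^(j-i)) * E))"
  proof -
    have "fps_X^j * (fps_const fps_X + cc s * fps_X)^j * E
       = (\<Sum>i\<le>j. fps_X^j * (of_nat (j choose i) * fps_const fps_X ^ i * (cc s * fps_X)^(j-i)) * E)"
      unfolding binomial_ring by (simp add: sum_distrib_left sum_distrib_right)
    also have "\<dots> = (\<Sum>i\<le>j. fps_X^(2*j-i) * (fps_const (fps_X^i) * cc (of_nat (j choose i) * s^(j-i)) * E))"
    proof (rule sum.cong)
      fix i assume "i \<in> {..j}"
      then have "2*j - i = j + (j - i)" by auto
      then have "fps_X^(2*j-i) = (fps_X^j * fps_X^(j-i) :: 'a fps fps)" by (simp add: power_add)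
      then show "fps_X^j * (of_nat (j choose i) * fps_const fps_X ^ i * (cc s * fps_X)^(j-i)) * E
          = fps_X^(2*j-i) * (fps_const (fps_X^i) * cc (of_nat (j choose i) * s^(j-i)) * E)"
        by (simp add: power_mult_distrib mult_ac)
    qed simp
    finally show ?thesis .
  qed
  have "((fps_X^j * (fps_const fps_X + cc s * fps_X)^j * E) $ n) $ k
      = (\<Sum>i\<le>j. if i = k then (if 2*j-i \<le> n then of_nat (j choose i) * s^(j-i) * of_nat (((n-(2*j-i))+2*j) choose (2*j)) * r^(n-(2*j-i)) else 0) else 0)"
    unfolding expand fps_sum_nth unfolding E_def term_nth by (intro sum.cong) auto
  also have "\<dots> = (if k \<le> j then (if 2*j-k \<le> n then of_nat (j choose k) * s^(j-k) * of_nat (((n-(2*j-k))+2*j) choose (2*j)) * r^(n-(2*j-k)) else 0) else 0)"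
    by (subst sum.delta) auto
  also have "\<dots> = (if 2*j \<le> n + k then of_nat (j choose k) * s^(j-k) * of_nat ((n+k) choose (2*j)) * r^(n+k-2*j) else 0)"
  proof (cases "k \<le> j")
    case True
    then show ?thesis
    proof (cases "2*j \<le> n + k")
      case True2: True
      have "n - (2*j-k) + 2*j = n + k" "n - (2*j-k) = n + k - 2*j" using True True2 by auto
      then show ?thesis using True True2 by simp
    qed (use True in auto)
  qed (simp add: binomial_eq_0)
  finally show ?thesis unfolding E_def .
qed

lemma pow2_swap: "((a::'b::monoid_mult)^2)^x = (a^x)^2"
  by (metis power_mult mult.commute)

lemma AA_nth:
  "(AA r s $ n) $ k = (\<Sum>j=0..n. catalan j * ((fps_X^j * (fps_const fps_X + cc s * fps_X)^j * Eg r ^ Suc (2*j)) $ n) $ k)"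
proof -
  define V where "V = (fps_const fps_X + cc s * fps_X) * Eg r ^ 2"
  define W where "W = WW r s"
  have WV: "W = fps_X * V" unfolding W_def WW_def V_def by (simp add: mult_ac)
  define Sg where "Sg = (\<Sum>j=0..n. cc (catalan j) * W^j)"
  have trunc: "(Cat2 oo W) $ m = Sg $ m" if "m \<le> n" for m
  proof -
    have "Sg $ m = (\<Sum>j=0..n. fps_const (catalan j) * W^j $ m)"
      unfolding Sg_def fps_sum_nth by simp
    also have "\<dots> = (\<Sum>j=0..m. fps_const (catalan j) * W^j $ m)"
    proof (rule sum.mono_neutral_right)
      show "\<forall>i\<in>{0..n} - {0..m}. fps_const (catalan i) * W ^ i $ m = 0"
        unfolding WV power_mult_distrib by (auto simp: fps_X_power_mult_nth)
    qed (use that in auto)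
    also have "\<dots> = (Cat2 oo W) $ m"
      unfolding fps_compose_nth by (simp add: Cat2_def)
    finally show ?thesis by simp
  qed
  have "AA r s $ n = (Eg r * Sg) $ n"
    unfolding AA_def W_def[symmetric] fps_mult_nth using trunc by (intro sum.cong) auto
  also have "Eg r * Sg = (\<Sum>j=0..n. cc (catalan j) * (fps_X^j * (fps_const fps_X + cc s * fps_X)^j * Eg r ^ Suc (2*j)))"
    unfolding Sg_def sum_distrib_left WV V_def
    by (intro sum.cong) (simp_all add: power_mult_distrib power_mult pow2_swap mult_ac)
  finally show ?thesis by (simp add: fps_sum_nth)
qed

theorem mainTheorem16:
  fixes r s :: "'a::field_char_0" and n k :: nat
  defines "X \<equiv> (fps_X :: 'a fps fps)"
      and "Y \<equiv> fps_const (fps_X :: 'a fps)"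
      and "R \<equiv> fps_const (fps_const r :: 'a fps)"
      and "S \<equiv> fps_const (fps_const s :: 'a fps)"
  shows "fps_nth (fps_nth (fps_shift 1 (Rev (X * (1 - Y * X) * inverse (1 + R * X + S * X ^ 2)))) n) k
     = (\<Sum>j = k..n. of_nat (j choose k) * of_nat ((n + k) choose (2 * j))
          * s ^ (j - k) * r ^ (n + k - 2 * j) * catalan j)"
proof -
  have RS: "R = cc r" "S = cc s" unfolding R_def S_def cc_def by simp_all
  have "fps_shift 1 (Rev (X * (1 - Y * X) * inverse (1 + R * X + S * X ^ 2))) = AA r s"
    unfolding RS X_def Y_def Rev_eq mult.commute[of "fps_X" "AA r s"] by (rule fps_shift_times_fps_X')
  then have "fps_nth (fps_nth (fps_shift 1 (Rev (X * (1 - Y * X) * inverse (1 + R * X + S * X ^ 2)))) n) k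
      = (\<Sum>j=0..n. catalan j * (if 2*j \<le> n + k then of_nat (j choose k) * s^(j-k) * of_nat ((n+k) choose (2*j)) * r^(n+k-2*j) else 0))"
    by (simp only: AA_nth T_nth)
  also have "\<dots> = (\<Sum>j=0..n. of_nat (j choose k) * of_nat ((n + k) choose (2 * j))
          * s ^ (j - k) * r ^ (n + k - 2 * j) * catalan j)"
    by (intro sum.cong) (auto simp: binomial_eq_0)
  also have "\<dots> = (\<Sum>j = k..n. of_nat (j choose k) * of_nat ((n + k) choose (2 * j))
          * s ^ (j - k) * r ^ (n + k - 2 * j) * catalan j)"
    by (rule sum.mono_neutral_right) (auto simp: binomial_eq_0)
  finally show ?thesis .
qed


end
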